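(* Consider a quantum data-syndrome code with $n$ qubits and $m$ measurement bits, $N=2n+m$, and parity check matrix $H_{DS}=[F\ \ I_m]\in\mathbb F_2^{m\times N}$, where $F$ is the $m\times 2n$ matrix with rows $f^{(1)},\dots,f^{(m)}$. Let $\mathscr S_{DS}\subseteq\mathbb F_2^N$ be the row span of $H_{DS}$ and $T$ the $|\mathscr S_{DS}|\times N$ matrix whose rows are exactly the elements of $\mathscr S_{DS}$ (each once). Let $\gamma\in\Delta^{D}$. Then in the restriction of $T$ to the columns indexed by $\overline\gamma$, every bit string in $\mathbb F_2^{\overline\gamma}$ appears equally often as a row.
   Context: Phase space representation: a Pauli operator $X^{x_1}Z^{z_1}\otimes\cdots\otimes X^{x_n}Z^{z_n}$ (modulo phases) is identified with $(x,z)\in\mathbb F_2^{2n}$; for $v=(x,z)$ let $\overline v=(z,x)$. The code is given by pairwise commuting stabilizer generators $g^{(1)},\dots,g^{(l)}\in\mathbb F_2^{2n}$ (i.e. $\overline{g^{(i)}}\cdot g^{(j)}=0$) and a classical generator matrix $G_C=[I_l\ A]\in\mathbb F_2^{l\times m}$; $f^{(i)}=\sum_{j=1}^l(G_C)_{j,i}g^{(j)}$ for $i\in[m]$. Errors are $e=(e_d,e_m)\in\mathbb F_2^{2n}\times\mathbb F_2^m=\mathbb F_2^N$, with $\overline e=(\overline{e_d},e_m)$, and syndrome $\mathrm{syn}(e)_i=f^{(i)}\cdot\overline{e_d}+(e_m)_i$, i.e. $\mathrm{syn}(e)=H_{DS}\overline e$. Vectors are identified with support sets in $[N]$; for $\gamma\subseteq[N]$,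 $\overline\gamma$ is its image under the coordinate permutation swapping $i\leftrightarrow i+n$ for $i\in[n]$ and fixing $2n+1,\dots,N$. $\Delta^{D}=\{\gamma\subseteq[N]:\mathrm{syn}(e)\ne0 \text{ for all nonzero } e \text{ with } \mathrm{supp}(e)\subseteq\gamma\}$. *)

theory Defs
  imports Main
begin

text \<open>Vectors of F_2^N are identified with their support sets in [N] = {1..N}.
  Addition is symmetric difference; the F_2 sum of a family is the set of
  coordinates covered an odd number of times; the dot product is the parity
  of the size of the intersection (True = 1).\<close>

definition f2sum :: "('a \<Rightarrow> nat set) \<Rightarrow> 'a set \<Rightarrow> nat set" where
  "f2sum F J = {k. odd (card {j \<in> J. k \<in> F j})}"

definition f2dot :: "nat set \<Rightarrow> nat set \<Rightarrow> bool" where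
  "f2dot u v = odd (card (u \<inter> v))"

definition swp :: "nat \<Rightarrow> nat \<Rightarrow> nat" where
  "swp n i = (if 1 \<le> i \<and> i \<le> n then i + n
              else if n < i \<and> i \<le> 2*n then i - n else i)"

definition bar :: "nat \<Rightarrow> nat set \<Rightarrow> nat set" where
  "bar n \<gamma> = swp n ` \<gamma>"

text \<open>Classical generator matrix G_C = [I_l A] (l x m); A j k for j in [l], k in [m-l].\<close>
definition GC :: "nat \<Rightarrow> (nat \<Rightarrow> nat \<Rightarrow> bool) \<Rightarrow> nat \<Rightarrow> nat \<Rightarrow> bool" where
  "GC l A j i = (if i \<le> l then j = i else A j (i - l))"

definition fvec :: "nat \<Rightarrow> (nat \<Rightarrow> nat \<Rightarrow> bool) \<Rightarrow> (nat \<Rightarrow> nat set) \<Rightarrow> nat \<Rightarrow> nat set" where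
  "fvec l A g i = f2sum g {j \<in> {1..l}. GC l A j i}"

text \<open>syn(e)_i = f^(i) . bar(e_d) + (e_m)_i, returned as the support set in [m];
  coordinate i of e_m is coordinate 2n+i of e.\<close>
definition syn :: "nat \<Rightarrow> nat \<Rightarrow> nat \<Rightarrow> (nat \<Rightarrow> nat \<Rightarrow> bool) \<Rightarrow> (nat \<Rightarrow> nat set) \<Rightarrow> nat set \<Rightarrow> nat set" where
  "syn n m l A g e = {i \<in> {1..m}.
      f2dot (fvec l A g i) (bar n (e \<inter> {1..2*n})) \<noteq> (2*n + i \<in> e)}"

definition DeltaD :: "nat \<Rightarrow> nat \<Rightarrow> nat \<Rightarrow> (nat \<Rightarrow> nat \<Rightarrow> bool) \<Rightarrow> (nat \<Rightarrow> nat set) \<Rightarrow> nat set set" where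
  "DeltaD n m l A g = {\<gamma>. \<gamma> \<subseteq> {1..2*n+m} \<and>
      (\<forall>e. e \<subseteq> \<gamma> \<and> e \<noteq> {} \<longrightarrow> syn n m l A g e \<noteq> {})}"

text \<open>Row i of H_DS = [F I_m]: (f^(i), unit vector i in the measurement part).\<close>
definition HDSrow :: "nat \<Rightarrow> nat \<Rightarrow> (nat \<Rightarrow> nat \<Rightarrow> bool) \<Rightarrow> (nat \<Rightarrow> nat set) \<Rightarrow> nat \<Rightarrow> nat set" where
  "HDSrow n l A g i = fvec l A g i \<union> {2*n + i}"

definition SDS :: "nat \<Rightarrow> nat \<Rightarrow> nat \<Rightarrow> (nat \<Rightarrow> nat \<Rightarrow> bool) \<Rightarrow> (nat \<Rightarrow> nat set) \<Rightarrow> nat set set" where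
  "SDS n m l A g = {f2sum (HDSrow n l A g) I | I. I \<subseteq> {1..m}}"

end

theory Submission
  imports Defs
begin

definition symd :: "nat set \<Rightarrow> nat set \<Rightarrow> nat set" where
  "symd A B = (A - B) \<union> (B - A)"

lemma odd_card_symd:
  assumes "finite A" "finite B"
  shows "odd (card (symd A B)) \<longleftrightarrow> (odd (card A) \<noteq> odd (card B))"
proof -
  have a: "card A = card (A - B) + card (A \<inter> B)"
    proof -
    have "A = (A - B) \<union> (A \<inter> B)" "(A - B) \<inter> (A \<inter> B) = {}" by blast+
    then show ?thesis using card_Un_disjoint[of "A - B" "A \<inter> B"] assms by (metis finite_Diff finite_Int)
  qed
  have b: "card B = card (B - A) + card (A \<inter> B)"
    proof -
    have "B = (B - A) \<union> (A \<inter> B)" "(B - A) \<inter> (A \<inter> B) = {}" by blast+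
    then show ?thesis using card_Un_disjoint[of "B - A" "A \<inter> B"] assms by (metis finite_Diff finite_Int)
  qed
  have c: "card (symd A B) = card (A - B) + card (B - A)"
    unfolding symd_def by (rule card_Un_disjoint) (use assms in auto)
  show ?thesis using a b c by auto
qed

lemma f2sum_symd:
  assumes "finite I" "finite J"
  shows "f2sum F (symd I J) = symd (f2sum F I) (f2sum F J)"
proof -
  have eq: "{j \<in> symd I J. k \<in> F j} = symd {j \<in> I. k \<in> F j} {j \<in> J. k \<in> F j}" for k
    by (auto simp: symd_def)
  show ?thesis
  proof (rule set_eqI)
    fix k
    have "k \<in> f2sum F (symd I J) \<longleftrightarrow> odd (card (symd {j \<in> I. k \<in> F j} {j \<in> J. k \<in> F j}))"
      by (simp add: f2sum_def eq)
    also have "\<dots> \<longleftrightarrow> (odd (card {j \<in> I. k \<in> F j}) \<noteq> odd (card {j \<in> J. k \<in> F j}))"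
      by (rule odd_card_symd) (use assms in auto)
    also have "\<dots> \<longleftrightarrow> k \<in> symd (f2sum F I) (f2sum F J)"
      unfolding symd_def[of "f2sum F I"] by (auto simp: f2sum_def)
    finally show "k \<in> f2sum F (symd I J) \<longleftrightarrow> k \<in> symd (f2sum F I) (f2sum F J)" .
  qed
qed

lemma symd_Int: "symd A C \<inter> B = symd (A \<inter> B) (C \<inter> B)"
  by (auto simp: symd_def)

lemma span_surj:
  assumes fin: "finite B" and cl: "\<forall>s\<in>S. \<forall>t\<in>S. symd s t \<in> S" and z: "{} \<in> S"
    and H: "\<forall>e. e \<subseteq> B \<and> e \<noteq> {} \<longrightarrow> (\<exists>s\<in>S. odd (card (s \<inter> e)))"
  shows "\<forall>b \<subseteq> B. \<exists>s\<in>S. s \<inter> B = b"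
  using fin H
proof (induction B rule: finite_induct)
  case empty
  then show ?case using z by auto
next
  case (insert x B')
  have H': "\<forall>e. e \<subseteq> B' \<and> e \<noteq> {} \<longrightarrow> (\<exists>s\<in>S. odd (card (s \<inter> e)))"
    using insert.prems by blast
  have IH: "\<forall>b \<subseteq> B'. \<exists>s\<in>S. s \<inter> B' = b" using insert.IH H' by blast
  have t: "\<exists>t\<in>S. t \<inter> insert x B' = {x}"
  proof (rule ccontr)
    assume nt: "\<not> (\<exists>t\<in>S. t \<inter> insert x B' = {x})"
    have k0: "\<forall>s\<in>S. s \<inter> B' = {} \<longrightarrow> x \<notin> s"
    proof (intro ballI impI notI)
      fix s assume "s \<in> S" "s \<inter> B' = {}" "x \<in> s"
      then have "s \<inter> insert x B' = {x}" by auto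
      then show False using nt \<open>s \<in> S\<close> by blast
    qed
    have wd: "\<forall>s1\<in>S. \<forall>s2\<in>S. s1 \<inter> B' = s2 \<inter> B' \<longrightarrow> (x \<in> s1 \<longleftrightarrow> x \<in> s2)"
    proof (intro ballI impI)
      fix s1 s2 assume "s1 \<in> S" "s2 \<in> S" "s1 \<inter> B' = s2 \<inter> B'"
      then have "symd s1 s2 \<in> S" using cl by blast
      moreover have "symd s1 s2 \<inter> B' = {}" using \<open>s1 \<inter> B' = s2 \<inter> B'\<close>
        unfolding symd_def by blast
      ultimately have "x \<notin> symd s1 s2" using k0 by blast
      then show "x \<in> s1 \<longleftrightarrow> x \<in> s2" by (auto simp: symd_def)
    qed
    define e' where "e' = {y \<in> B'. \<exists>s\<in>S. s \<inter> B' = {y} \<and> x \<in> s}"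
    have e'B: "e' \<subseteq> B'" unfolding e'_def by auto
    have key0: "finite c \<Longrightarrow> c \<subseteq> B' \<Longrightarrow>
        \<forall>s\<in>S. s \<inter> B' = c \<longrightarrow> (x \<in> s \<longleftrightarrow> odd (card (c \<inter> e')))" for c
    proof (induction c rule: finite_induct)
      case empty
      then show ?case using k0 by auto
    next
      case (insert y c')
      show ?case
      proof (intro ballI impI)
        fix s assume sS: "s \<in> S" and sc: "s \<inter> B' = insert y c'"
        have yB: "y \<in> B'" using insert.prems by auto
        obtain sy where syS: "sy \<in> S" and syB: "sy \<inter> B' = {y}" using IH yB by blast
        have d1: "symd s sy \<in> S" using cl sS syS by blast
        have d2: "symd s sy \<inter> B' = c'" using sc syB insert.hyps(2)
          by (auto simp: symd_def)
        have ih: "x \<in> symd s sy \<longleftrightarrow> odd (card (c' \<inter> e'))"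
          using insert.IH insert.prems d1 d2 by blast
        have xy: "x \<in> sy \<longleftrightarrow> y \<in> e'"
        proof
          assume "x \<in> sy" then show "y \<in> e'" unfolding e'_def using yB syS syB by blast
        next
          assume "y \<in> e'"
          then obtain s0 where "s0 \<in> S" "s0 \<inter> B' = {y}" "x \<in> s0" unfolding e'_def by blast
          then show "x \<in> sy" using wd[rule_format, of s0 sy] syS syB by simp
        qed
        have fc: "finite (c' \<inter> e')" using insert.hyps(1) by auto
        have cc: "card (insert y c' \<inter> e') = (if y \<in> e' then Suc (card (c' \<inter> e')) else card (c' \<inter> e'))"
          using fc insert.hyps(2) by (auto simp: Int_insert_left)
        have "x \<in> s \<longleftrightarrow> (x \<in> symd s sy) \<noteq> (x \<in> sy)" by (auto simp: symd_def)
        then show "x \<in> s \<longleftrightarrow> odd (card (insert y c' \<inter> e'))"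
          using ih xy cc by auto
      qed
    qed
    have key: "\<forall>s\<in>S. x \<in> s \<longleftrightarrow> odd (card (s \<inter> B' \<inter> e'))"
    proof
      fix s assume "s \<in> S"
      have "finite (s \<inter> B')" using insert.hyps(1) by simp
      then show "x \<in> s \<longleftrightarrow> odd (card (s \<inter> B' \<inter> e'))"
        using key0[of "s \<inter> B'"] \<open>s \<in> S\<close> by blast
    qed
    have xe': "x \<notin> e'" using e'B insert.hyps(2) by blast
    obtain s where sS: "s \<in> S" and so: "odd (card (s \<inter> insert x e'))"
    proof -
      have "insert x e' \<subseteq> insert x B' \<and> insert x e' \<noteq> {}" using e'B by blast
      from insert.prems[THEN spec[of _ "insert x e'"], THEN mp, OF this]
      show ?thesis using that by blast
    qed
    have fe: "finite (s \<inter> e')" using e'B insert.hyps(1) by (meson finite_Int finite_subset)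
    have eq: "s \<inter> B' \<inter> e' = s \<inter> e'" using e'B by auto
    have "card (s \<inter> insert x e') = (if x \<in> s then Suc (card (s \<inter> e')) else card (s \<inter> e'))"
      using fe xe' by (auto simp: Int_insert_right)
    moreover have "x \<in> s \<longleftrightarrow> odd (card (s \<inter> e'))" using key sS eq by metis
    ultimately show False using so by (cases "x \<in> s") auto
  qed
  then obtain t where tS: "t \<in> S" and tx: "t \<inter> insert x B' = {x}" by blast
  show ?case
  proof (intro allI impI)
    fix b assume bB: "b \<subseteq> insert x B'"
    have "b - {x} \<subseteq> B'" using bB by blast
    then obtain s where sS: "s \<in> S" and sb: "s \<inter> B' = b - {x}" using IH by blast
    have ms: "y \<in> s \<and> y \<in> B' \<longleftrightarrow> y \<in> b \<and> y \<noteq> x" for y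
      using sb by (simp add: set_eq_iff)
    have mt: "y \<in> t \<and> (y = x \<or> y \<in> B') \<longleftrightarrow> y = x" for y
      using tx by (simp add: set_eq_iff)
    have mb: "y \<in> b \<Longrightarrow> y = x \<or> y \<in> B'" for y using bB by blast
    show "\<exists>s\<in>S. s \<inter> insert x B' = b"
    proof (cases "x \<in> s \<longleftrightarrow> x \<in> b")
      case True
      have "s \<inter> insert x B' = b"
      proof (rule set_eqI)
        fix y show "y \<in> s \<inter> insert x B' \<longleftrightarrow> y \<in> b"
          using True ms[of y] mb[of y] by blast
      qed
      then show ?thesis using sS by blast
    next
      case False
      have "symd s t \<inter> insert x B' = b"
      proof (rule set_eqI)
        fix y show "y \<in> symd s t \<inter> insert x B' \<longleftrightarrow> y \<in> b"
          unfolding symd_def using False ms[of y] mt[of y] mb[of y] insert.hyps(2) by blast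
      qed
      then show ?thesis using cl sS tS by blast
    qed
  qed
qed

lemma fibers:
  assumes cl: "\<forall>s\<in>S. \<forall>t\<in>S. symd s t \<in> S"
    and s1: "s1 \<in> S" "s1 \<inter> B = b" and s2: "s2 \<in> S" "s2 \<inter> B = b'"
  shows "card {s \<in> S. s \<inter> B = b} = card {s \<in> S. s \<inter> B = b'}"
proof -
  define d where "d = symd s1 s2"
  have dS: "d \<in> S" using cl s1 s2 unfolding d_def by blast
  have dB: "d \<inter> B = symd b b'" unfolding d_def using s1 s2 symd_Int by auto
  have inv: "symd (symd s d) d = s" for s by (auto simp: symd_def)
  have "bij_betw (\<lambda>s. symd s d) {s \<in> S. s \<inter> B = b} {s \<in> S. s \<inter> B = b'}"
  proof (rule bij_betw_byWitness[where f' = "\<lambda>s. symd s d"])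
    show "\<forall>a\<in>{s \<in> S. s \<inter> B = b}. symd (symd a d) d = a" using inv by blast
    show "\<forall>a\<in>{s \<in> S. s \<inter> B = b'}. symd (symd a d) d = a" using inv by blast
    show "(\<lambda>s. symd s d) ` {s \<in> S. s \<inter> B = b} \<subseteq> {s \<in> S. s \<inter> B = b'}"
      using cl dS dB by (auto simp: symd_Int) (auto simp: symd_def)
    show "(\<lambda>s. symd s d) ` {s \<in> S. s \<inter> B = b'} \<subseteq> {s \<in> S. s \<inter> B = b}"
      using cl dS dB by (auto simp: symd_Int) (auto simp: symd_def)
  qed
  then show ?thesis by (rule bij_betw_same_card)
qed

lemma swp_swp: "swp n (swp n i) = i"
  unfolding swp_def by auto

lemma mem_bar: "x \<in> bar n e \<longleftrightarrow> swp n x \<in> e"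
proof
  assume "x \<in> bar n e"
  then obtain y where "y \<in> e" "x = swp n y" unfolding bar_def by blast
  then show "swp n x \<in> e" by (simp add: swp_swp)
next
  assume "swp n x \<in> e"
  then have "swp n (swp n x) \<in> bar n e" unfolding bar_def by blast
  then show "x \<in> bar n e" by (simp add: swp_swp)
qed

lemma swp_range: "swp n x \<in> {1..2*n} \<longleftrightarrow> x \<in> {1..2*n}"
  by (auto simp: swp_def)

lemma swp_fix: "i \<ge> 1 \<Longrightarrow> swp n (2*n + i) = 2*n + i"
  by (simp add: swp_def)

lemma f2sum_empty: "f2sum F {} = {}"
  by (simp add: f2sum_def)

lemma f2sum_single: "f2sum F {i} = F i"
proof -
  have "{j \<in> {i}. k \<in> F j} = (if k \<in> F i then {i} else {})" for k by auto
  then show ?thesis by (auto simp: f2sum_def)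
qed

lemma fvec_sub:
  assumes g_sub: "\<forall>j \<in> {1..l}. g j \<subseteq> {1..2*n}"
  shows "fvec l A g i \<subseteq> {1..2*n}"
proof
  fix k assume "k \<in> fvec l A g i"
  then have "odd (card {j \<in> {j \<in> {1..l}. GC l A j i}. k \<in> g j})"
    by (simp add: fvec_def f2sum_def)
  then have "{j \<in> {j \<in> {1..l}. GC l A j i}. k \<in> g j} \<noteq> {}" by (metis card.empty even_zero)
  then obtain j where "j \<in> {1..l}" "k \<in> g j" by blast
  then show "k \<in> {1..2*n}" using g_sub by blast
qed

theorem lemma13:
  fixes n m l :: nat and g :: "nat \<Rightarrow> nat set" and A :: "nat \<Rightarrow> nat \<Rightarrow> bool"
    and \<gamma> :: "nat set"
  assumes lm: "l \<le> m"
    and g_sub: "\<forall>j \<in> {1..l}. g j \<subseteq> {1..2*n}"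
    and g_comm: "\<forall>i \<in> {1..l}. \<forall>j \<in> {1..l}. \<not> f2dot (bar n (g i)) (g j)"
    and \<gamma>_D: "\<gamma> \<in> DeltaD n m l A g"
  shows "\<forall>b b'. b \<subseteq> bar n \<gamma> \<longrightarrow> b' \<subseteq> bar n \<gamma> \<longrightarrow>
           card {s \<in> SDS n m l A g. s \<inter> bar n \<gamma> = b}
         = card {s \<in> SDS n m l A g. s \<inter> bar n \<gamma> = b'}"
proof -
  let ?S = "SDS n m l A g"
  let ?B = "bar n \<gamma>"
  have \<gamma>sub: "\<gamma> \<subseteq> {1..2*n+m}" using \<gamma>_D by (simp add: DeltaD_def)
  have finB: "finite ?B" unfolding bar_def using \<gamma>sub by (meson finite_atLeastAtMost finite_imageI finite_subset)
  have cl: "\<forall>s\<in>?S. \<forall>t\<in>?S. symd s t \<in> ?S"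
  proof (intro ballI)
    fix s t assume "s \<in> ?S" "t \<in> ?S"
    then obtain I J where I: "I \<subseteq> {1..m}" "s = f2sum (HDSrow n l A g) I"
      and J: "J \<subseteq> {1..m}" "t = f2sum (HDSrow n l A g) J" unfolding SDS_def by blast
    have fI: "finite I" "finite J" using I J by (auto intro: finite_subset)
    have "symd s t = f2sum (HDSrow n l A g) (symd I J)" using f2sum_symd[OF fI] I J by simp
    moreover have "symd I J \<subseteq> {1..m}" using I J by (auto simp: symd_def)
    ultimately show "symd s t \<in> ?S" unfolding SDS_def by blast
  qed
  have z: "{} \<in> ?S" unfolding SDS_def using f2sum_empty by blast
  have H: "\<forall>e. e \<subseteq> ?B \<and> e \<noteq> {} \<longrightarrow> (\<exists>s\<in>?S. odd (card (s \<inter> e)))"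
  proof (intro allI impI)
    fix e assume e: "e \<subseteq> ?B \<and> e \<noteq> {}"
    define e0 where "e0 = bar n e"
    have e0g: "e0 \<subseteq> \<gamma>"
    proof
      fix x assume "x \<in> e0"
      then have "swp n x \<in> bar n \<gamma>" using e unfolding e0_def by (auto simp: mem_bar)
      then show "x \<in> \<gamma>" by (simp add: mem_bar swp_swp)
    qed
    have e0ne: "e0 \<noteq> {}" using e unfolding e0_def bar_def by blast
    have "syn n m l A g e0 \<noteq> {}" using \<gamma>_D e0g e0ne by (simp add: DeltaD_def)
    then obtain i where i: "i \<in> {1..m}"
      and di: "f2dot (fvec l A g i) (bar n (e0 \<inter> {1..2*n})) \<noteq> (2*n + i \<in> e0)"
      unfolding syn_def by blast
    have b1: "bar n (e0 \<inter> {1..2*n}) = e \<inter> {1..2*n}"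
    proof (rule set_eqI)
      fix x
      have "x \<in> bar n (e0 \<inter> {1..2*n}) \<longleftrightarrow> swp n x \<in> e0 \<and> swp n x \<in> {1..2*n}"
        by (simp only: mem_bar Int_iff)
      also have "\<dots> \<longleftrightarrow> x \<in> e \<and> x \<in> {1..2*n}"
        unfolding e0_def by (simp only: mem_bar swp_swp swp_range)
      finally show "x \<in> bar n (e0 \<inter> {1..2*n}) \<longleftrightarrow> x \<in> e \<inter> {1..2*n}" by simp
    qed
    have b2: "2*n + i \<in> e0 \<longleftrightarrow> 2*n + i \<in> e"
      unfolding e0_def using i by (simp add: mem_bar swp_fix)
    have fsub: "fvec l A g i \<subseteq> {1..2*n}" by (rule fvec_sub[OF g_sub])
    have finE: "finite e" using e finB finite_subset by blast
    have ni: "2*n + i \<notin> fvec l A g i" using fsub i by auto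
    have split: "(fvec l A g i \<union> {2*n + i}) \<inter> e
        = (if 2*n + i \<in> e then insert (2*n+i) (fvec l A g i \<inter> (e \<inter> {1..2*n}))
           else fvec l A g i \<inter> (e \<inter> {1..2*n}))"
      using fsub by auto
    have fin2: "finite (fvec l A g i \<inter> (e \<inter> {1..2*n}))" using finE by simp
    have "odd (card ((fvec l A g i \<union> {2*n + i}) \<inter> e))"
      using di b1 b2 ni fin2 unfolding split f2dot_def by (cases "2*n + i \<in> e") auto
    moreover have "fvec l A g i \<union> {2*n + i} \<in> ?S"
    proof -
      have "{i} \<subseteq> {1..m}" using i by simp
      then have "f2sum (HDSrow n l A g) {i} \<in> ?S" unfolding SDS_def by blast
      then show ?thesis by (simp only: f2sum_single HDSrow_def)
    qed
    ultimately show "\<exists>s\<in>?S. odd (card (s \<inter> e))" by blast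
  qed
  have surj: "\<forall>b \<subseteq> ?B. \<exists>s\<in>?S. s \<inter> ?B = b"
    by (rule span_surj[OF finB cl z H])
  show ?thesis
  proof (intro allI impI)
    fix b b' assume "b \<subseteq> ?B" "b' \<subseteq> ?B"
    then obtain s1 s2 where "s1 \<in> ?S" "s1 \<inter> ?B = b" "s2 \<in> ?S" "s2 \<inter> ?B = b'"
      using surj by meson
    then show "card {s \<in> ?S. s \<inter> ?B = b} = card {s \<in> ?S. s \<inter> ?B = b'}"
      by (intro fibers[OF cl]) auto
  qed
qed

end
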